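(* Let $\mathcal{G}$ be a finite connected undirected simple graph with $N$ nodes which is not a tree, with adjacency matrix $(a_{ij})$ and non-backtracking centralities $x_1,\dots,x_N$. Let $\mathcal{W}$ be the weighted network with weights $w_{ij}=a_{ij}x_ix_j$, strengths $s_i=\sum_k w_{ik}$, total strength $s=\sum_{i,j}w_{ij}$, and Laplacian $\mathbf{L}=\mathbf{S}-\mathbf{W}$ with $\mathbf{S}=\mathrm{diag}(s_1,\dots,s_N)$, $\mathbf{W}=(w_{ij})$. Let $0=\theta_1<\theta_2\le\dots\le\theta_N$ be the eigenvalues of $\mathbf{L}$ with orthonormal eigenvectors $\phi_1,\dots,\phi_N$, $\phi_k=(\phi_{k1},\dots,\phi_{kN})^\top$. Then for the NBCRW on $\mathcal{G}$: (i) the hitting time from node $i$ to node $j$ is $$T_{ij}=\sum_{z=1}^N s_z\sum_{k=2}^N\frac{1}{\theta_k}\left(\phi_{kj}^2-\phi_{ki}\phi_{kj}-\phi_{kj}\phi_{kz}+\phi_{ki}\phi_{kz}\right);$$ (ii) the partial mean hitting time to node $j$ is $$T_j=\frac{N}{N-1}\sum_{k=2}^N\frac{1}{\theta_k}\left(s\,\phi_{kj}^2-\phi_{kj}\sum_{z=1}^N s_z\phi_{kz}\right);$$ (iii) the global mean hitting time is $$\langle T\rangle=\frac{s}{N-1}\sum_{k=2}^N\frac{1}{\theta_k}.$$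
   Context: The non-backtracking matrix $\mathbf{B}$ of $\mathcal{G}$ is the $2E\times 2E$ matrix indexed by directed edges $i\to j$ (each undirected edge gives two directed edges), with $B_{i\to j,\,k\to l}=1$ if $j=k$ and $i\neq l$, and $0$ otherwise; $v=(v_{i\to j})$ is a non-negative eigenvector for its leading (Perron–Frobenius) eigenvalue. The non-backtracking centrality of node $i$ is $x_i=\sum_{j\in\mathcal{N}_i}v_{i\to j}$. The NBCRW is the Markov chain with $p_{ij}=a_{ij}x_j/\sum_k a_{ik}x_k$ (assumed defined). The hitting time $T_{ij}$ ($i\ne j$) is the expected number of steps for the walk started at $i$ to reach $j$ for the first time, with $T_{jj}=0$; the partial mean hitting time is $T_j=\frac{1}{N-1}\sum_{i=1}^N T_{ij}$; the global mean hitting time is $\langle T\rangle=\frac{1}{N(N-1)}\sum_{i}\sum_{j\ne i}T_{ij}$. *)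

theory Defs
  imports Complex_Main
begin

definition adjm :: "('n \<Rightarrow> 'n \<Rightarrow> bool) \<Rightarrow> 'n \<Rightarrow> 'n \<Rightarrow> real" where
  "adjm G i j = (if G i j then 1 else 0)"

definition simple_graph :: "('n \<Rightarrow> 'n \<Rightarrow> bool) \<Rightarrow> bool" where
  "simple_graph G \<longleftrightarrow> (\<forall>i j. G i j \<longrightarrow> G j i) \<and> (\<forall>i. \<not> G i i)"

definition connected_graph :: "('n \<Rightarrow> 'n \<Rightarrow> bool) \<Rightarrow> bool" where
  "connected_graph G \<longleftrightarrow> (\<forall>i j. G\<^sup>*\<^sup>* i j)"

definition is_cycle :: "('n \<Rightarrow> 'n \<Rightarrow> bool) \<Rightarrow> 'n list \<Rightarrow> bool" where
  "is_cycle G vs \<longleftrightarrow> length vs \<ge> 3 \<and> distinct vs \<and>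
     (\<forall>k < length vs - 1. G (vs ! k) (vs ! (k + 1))) \<and> G (last vs) (hd vs)"

definition is_tree :: "('n \<Rightarrow> 'n \<Rightarrow> bool) \<Rightarrow> bool" where
  "is_tree G \<longleftrightarrow> connected_graph G \<and> \<not> (\<exists>vs. is_cycle G vs)"

definition dir_edges :: "('n \<Rightarrow> 'n \<Rightarrow> bool) \<Rightarrow> ('n \<times> 'n) set" where
  "dir_edges G = {(i, j). G i j}"

definition nb_matrix :: "('n \<Rightarrow> 'n \<Rightarrow> bool) \<Rightarrow> 'n \<times> 'n \<Rightarrow> 'n \<times> 'n \<Rightarrow> real" where
  "nb_matrix G e f =
     (if e \<in> dir_edges G \<and> f \<in> dir_edges G \<and> snd e = fst f \<and> fst e \<noteq> snd f then 1 else 0)"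

definition nb_eigenvalue :: "('n \<Rightarrow> 'n \<Rightarrow> bool) \<Rightarrow> complex \<Rightarrow> bool" where
  "nb_eigenvalue G \<mu> \<longleftrightarrow> (\<exists>u :: 'n \<times> 'n \<Rightarrow> complex.
      (\<exists>e \<in> dir_edges G. u e \<noteq> 0) \<and>
      (\<forall>e \<in> dir_edges G. (\<Sum>f \<in> dir_edges G. of_real (nb_matrix G e f) * u f) = \<mu> * u e))"

definition nb_perron_vector :: "('n \<Rightarrow> 'n \<Rightarrow> bool) \<Rightarrow> real \<Rightarrow> ('n \<times> 'n \<Rightarrow> real) \<Rightarrow> bool" where
  "nb_perron_vector G lam v \<longleftrightarrow>
     (\<forall>e \<in> dir_edges G. v e \<ge> 0) \<and> (\<exists>e \<in> dir_edges G. v e \<noteq> 0) \<and>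
     (\<forall>e \<in> dir_edges G. (\<Sum>f \<in> dir_edges G. nb_matrix G e f * v f) = lam * v e) \<and>
     (\<forall>\<mu>. nb_eigenvalue G \<mu> \<longrightarrow> cmod \<mu> \<le> lam)"

definition nb_centrality :: "('n::finite \<Rightarrow> 'n \<Rightarrow> bool) \<Rightarrow> ('n \<times> 'n \<Rightarrow> real) \<Rightarrow> 'n \<Rightarrow> real" where
  "nb_centrality G v i = (\<Sum>j \<in> {j. G i j}. v (i, j))"

definition nbcrw_prob :: "('n::finite \<Rightarrow> 'n \<Rightarrow> bool) \<Rightarrow> ('n \<Rightarrow> real) \<Rightarrow> 'n \<Rightarrow> 'n \<Rightarrow> real" where
  "nbcrw_prob G x i j = adjm G i j * x j / (\<Sum>k\<in>UNIV. adjm G i k * x k)"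

text \<open>first_hit P j n i: probability that the chain with transition matrix P started at i
  visits j for the first time (at a positive time) at step n.\<close>

fun first_hit :: "('n::finite \<Rightarrow> 'n \<Rightarrow> real) \<Rightarrow> 'n \<Rightarrow> nat \<Rightarrow> 'n \<Rightarrow> real" where
  "first_hit P j 0 i = 0"
| "first_hit P j (Suc 0) i = P i j"
| "first_hit P j (Suc (Suc n)) i = (\<Sum>k \<in> {k. k \<noteq> j}. P i k * first_hit P j (Suc n) k)"

definition hitting_time :: "('n::finite \<Rightarrow> 'n \<Rightarrow> real) \<Rightarrow> 'n \<Rightarrow> 'n \<Rightarrow> real" where
  "hitting_time P i j = (if i = j then 0 else (\<Sum>n. real n * first_hit P j n i))"

definition partial_mean_hitting :: "('n::finite \<Rightarrow> 'n \<Rightarrow> real) \<Rightarrow> 'n \<Rightarrow> real" where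
  "partial_mean_hitting P j = (1 / (real (card (UNIV :: 'n set)) - 1)) * (\<Sum>i\<in>UNIV. hitting_time P i j)"

definition global_mean_hitting :: "('n::finite \<Rightarrow> 'n \<Rightarrow> real) \<Rightarrow> real" where
  "global_mean_hitting P =
     (1 / (real (card (UNIV :: 'n set)) * (real (card (UNIV :: 'n set)) - 1))) * (\<Sum>i\<in>UNIV. \<Sum>j \<in> {j. j \<noteq> i}. hitting_time P i j)"

definition nb_weight :: "('n \<Rightarrow> 'n \<Rightarrow> bool) \<Rightarrow> ('n \<Rightarrow> real) \<Rightarrow> 'n \<Rightarrow> 'n \<Rightarrow> real" where
  "nb_weight G x i j = adjm G i j * x i * x j"

definition strength :: "('n::finite \<Rightarrow> 'n \<Rightarrow> bool) \<Rightarrow> ('n \<Rightarrow> real) \<Rightarrow> 'n \<Rightarrow> real" where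
  "strength G x i = (\<Sum>k\<in>UNIV. nb_weight G x i k)"

definition total_strength :: "('n::finite \<Rightarrow> 'n \<Rightarrow> bool) \<Rightarrow> ('n \<Rightarrow> real) \<Rightarrow> real" where
  "total_strength G x = (\<Sum>i\<in>UNIV. \<Sum>j\<in>UNIV. nb_weight G x i j)"

definition laplacian :: "('n::finite \<Rightarrow> 'n \<Rightarrow> bool) \<Rightarrow> ('n \<Rightarrow> real) \<Rightarrow> 'n \<Rightarrow> 'n \<Rightarrow> real" where
  "laplacian G x i j = (if i = j then strength G x i else 0) - nb_weight G x i j"

end

theory Submission
  imports Defs "HOL-Analysis.Analysis"
begin

lemma completeness:
  fixes \<phi> :: "nat \<Rightarrow> 'n::finite \<Rightarrow> real"
  assumes orth: "\<forall>k \<in> {1..CARD('n)}. \<forall>l \<in> {1..CARD('n)}. (\<Sum>i\<in>UNIV. \<phi> k i * \<phi> l i) = (if k = l then 1 else 0)"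
  shows "(\<Sum>k=1..CARD('n). \<phi> k a * \<phi> k b) = (if a = b then 1 else 0)"
proof -
  obtain g :: "'n \<Rightarrow> nat" where g: "bij_betw g UNIV {1..CARD('n)}"
    using finite_same_card_bij[of "UNIV :: 'n set" "{1..CARD('n)}"] by auto
  define M :: "real^'n^'n" where "M = (\<chi> a b. \<phi> (g a) b)"
  have gin: "g a \<in> {1..CARD('n)}" for a using g by (auto simp: bij_betw_def)
  have ginj: "g a = g a' \<longleftrightarrow> a = a'" for a a' using g by (auto simp: bij_betw_def inj_on_def)
  have "M ** transpose M = mat 1"
  proof -
    have "(\<Sum>k\<in>UNIV. \<phi> (g i) k * \<phi> (g i') k) = (if i = i' then 1 else 0)" for i i'
      using orth gin[of i] gin[of i'] ginj[of i i'] by auto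
    thus ?thesis by (simp add: vec_eq_iff matrix_matrix_mult_def transpose_def M_def mat_def)
  qed
  hence "transpose M ** M = mat 1" using matrix_left_right_inverse by blast
  hence "(transpose M ** M) $ a $ b = mat 1 $ a $ b" by simp
  hence 1: "(\<Sum>c\<in>UNIV. \<phi> (g c) a * \<phi> (g c) b) = (if a = b then 1 else 0)"
    by (simp add: matrix_matrix_mult_def transpose_def M_def mat_def)
  have "(\<Sum>k=1..CARD('n). \<phi> k a * \<phi> k b) = (\<Sum>c\<in>UNIV. \<phi> (g c) a * \<phi> (g c) b)"
    using sum.reindex_bij_betw[OF g, of "\<lambda>k. \<phi> k a * \<phi> k b"] by simp
  with 1 show ?thesis by simp
qed

fun itq :: "('n::finite \<Rightarrow> 'n \<Rightarrow> real) \<Rightarrow> 'n \<Rightarrow> nat \<Rightarrow> ('n \<Rightarrow> real) \<Rightarrow> 'n \<Rightarrow> real" where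
  "itq P j 0 u = u"
| "itq P j (Suc m) u = (\<lambda>i. \<Sum>k\<in>{k. k \<noteq> j}. P i k * itq P j m u k)"

lemma itq_add: "itq P j m (\<lambda>i. a i + b i) i = itq P j m a i + itq P j m b i"
  by (induction m arbitrary: i) (auto simp: algebra_simps sum.distrib)

lemma itq_scale: "itq P j m (\<lambda>i. c * a i) i = c * itq P j m a i"
  by (induction m arbitrary: i) (auto simp: algebra_simps sum_distrib_left)

lemma itq_mono:
  assumes "\<And>i k. P i k \<ge> 0" "\<And>i. a i \<le> b i"
  shows "itq P j m a i \<le> itq P j m b i"
  using assms by (induction m arbitrary: i) (auto intro!: sum_mono mult_left_mono)

lemma itq_shift:
  "itq P j (Suc m) u i = itq P j m (\<lambda>i. \<Sum>k\<in>{k. k \<noteq> j}. P i k * u k) i"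
  by (induction m arbitrary: i) auto

lemma first_hit_nonneg:
  assumes "\<And>i k. P i k \<ge> 0"
  shows "first_hit P j n i \<ge> 0"
  using assms by (induction P j n i rule: first_hit.induct) (auto intro!: sum_nonneg)

lemma div2_at_top: "filterlim (\<lambda>m::nat. m div 2) at_top sequentially"
  unfolding filterlim_at_top eventually_sequentially
  by (metis div_le_mono nonzero_mult_div_cancel_left zero_neq_numeral)

lemma hitting_sums:
  fixes P :: "'n::finite \<Rightarrow> 'n \<Rightarrow> real" and E :: "'n \<Rightarrow> real"
  assumes Pnn: "\<And>i k. P i k \<ge> 0"
    and Prow: "\<And>i. (\<Sum>k\<in>UNIV. P i k) = 1"
    and Eeq: "\<And>i. E i = 1 + (\<Sum>k\<in>{k. k \<noteq> j}. P i k * E k)"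
  shows "(\<lambda>n. real n * first_hit P j n i) sums E i"
proof -
  define r where "r n = itq P j n (\<lambda>_. 1)" for n
  have split: "(\<Sum>k\<in>UNIV. f k) = f j + (\<Sum>k\<in>{k. k \<noteq> j}. f k)" for f :: "'n \<Rightarrow> real"
  proof -
    have "(\<Sum>k\<in>UNIV. f k) = (\<Sum>k\<in>insert j {k. k \<noteq> j}. f k)" by (rule sum.cong) auto
    also have "\<dots> = f j + (\<Sum>k\<in>{k. k \<noteq> j}. f k)" by (rule sum.insert) auto
    finally show ?thesis .
  qed
  have r_nn: "r n i' \<ge> 0" for n i'
    unfolding r_def by (induction n arbitrary: i') (auto intro!: sum_nonneg simp: Pnn)
  have fh: "first_hit P j (Suc n) i' = r n i' - r (Suc n) i'" for n i'
  proof (induction n arbitrary: i')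
    case 0
    have "P i' j = 1 - (\<Sum>k\<in>{k. k \<noteq> j}. P i' k)" using Prow[of i'] split[of "P i'"] by simp
    thus ?case by (simp add: r_def)
  next
    case (Suc n)
    have "first_hit P j (Suc (Suc n)) i' = (\<Sum>k\<in>{k. k \<noteq> j}. P i' k * (r n k - r (Suc n) k))"
      using Suc by simp
    also have "\<dots> = r (Suc n) i' - r (Suc (Suc n)) i'"
      by (simp add: r_def algebra_simps sum_subtractf)
    finally show ?case .
  qed
  have r_dec: "r (Suc n) i' \<le> r n i'" for n i'
    using fh[of n i'] first_hit_nonneg[where P=P and j=j and n="Suc n" and i=i', OF Pnn] by simp
  have r_antimono: "r n i' \<le> r m i'" if "m \<le> n" for m n i'
    using that
  proof (induction n rule: dec_induct)
    case base show ?case by simp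
  next
    case (step n) thus ?case using r_dec[of n i'] by linarith
  qed
  define M where "M = (\<Sum>i\<in>UNIV. \<bar>E i\<bar>)"
  have EM: "\<bar>E i'\<bar> \<le> M" for i'
    unfolding M_def by (rule member_le_sum) auto
  have Efun: "E = (\<lambda>i. 1 + (\<Sum>k\<in>{k. k \<noteq> j}. P i k * E k))" by (rule ext, rule Eeq)
  have decomp: "E i' = (\<Sum>n<m. r n i') + itq P j m E i'" for m i'
  proof (induction m arbitrary: i')
    case 0 then show ?case by simp
  next
    case (Suc m)
    have "itq P j m E i' = itq P j m (\<lambda>i. 1 + (\<Sum>k\<in>{k. k \<noteq> j}. P i k * E k)) i'"
      by (rule arg_cong[where f="\<lambda>f. itq P j m f i'", OF Efun])
    also have "\<dots> = r m i' + itq P j (Suc m) E i'"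
      by (simp only: itq_add r_def itq_shift)
    finally show ?case using Suc[of i'] by simp
  qed
  have bound: "\<bar>itq P j m E i'\<bar> \<le> M * r m i'" for m i'
  proof -
    have "itq P j m E i' \<le> itq P j m (\<lambda>i. M * 1) i'"
      by (rule itq_mono[OF Pnn]) (smt (verit) EM abs_le_iff mult_cancel_right1)
    moreover have "itq P j m (\<lambda>i. (-M) * 1) i' \<le> itq P j m E i'"
      by (rule itq_mono[OF Pnn]) (smt (verit) EM abs_le_iff mult_cancel_right1)
    ultimately show ?thesis unfolding itq_scale r_def by auto
  qed
  have M_nn: "M \<ge> 0" using EM[of i] by linarith
  have summ: "summable (\<lambda>n. r n i)"
  proof (rule bounded_imp_summable)
    show "0 \<le> r n i" for n by (rule r_nn)
    show "(\<Sum>k\<le>n. r k i) \<le> E i + M" for n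
    proof -
      have "(\<Sum>k\<le>n. r k i) = (\<Sum>k<Suc n. r k i)" using lessThan_Suc_atMost by simp
      also have "\<dots> = E i - itq P j (Suc n) E i" using decomp[of i "Suc n"] by simp
      also have "\<dots> \<le> E i + M * r (Suc n) i" using bound[of "Suc n" i] by simp
      also have "\<dots> \<le> E i + M * 1"
      proof -
        have "r (Suc n) i \<le> r 0 i" by (rule r_antimono) simp
        thus ?thesis using M_nn by (simp add: r_def mult_left_le)
      qed
      finally show ?thesis by simp
    qed
  qed
  have r0: "(\<lambda>n. r n i) \<longlonglongrightarrow> 0" by (rule summable_LIMSEQ_zero[OF summ])
  have it0: "(\<lambda>n. itq P j n E i) \<longlonglongrightarrow> 0"
  proof (rule tendsto_rabs_zero_cancel, rule real_tendsto_sandwich[of "\<lambda>_. 0" _ _ "\<lambda>n. M * r n i"])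
    show "\<forall>\<^sub>F n in sequentially. 0 \<le> \<bar>itq P j n E i\<bar>" by simp
    show "\<forall>\<^sub>F n in sequentially. \<bar>itq P j n E i\<bar> \<le> M * r n i" using bound by simp
    show "(\<lambda>_. 0::real) \<longlonglongrightarrow> 0" by simp
    show "(\<lambda>n. M * r n i) \<longlonglongrightarrow> 0" using tendsto_mult_right_zero[OF r0] by simp
  qed
  define A where "A m = (\<Sum>n<m. r n i)" for m
  have A_lim: "A \<longlonglongrightarrow> E i"
  proof -
    have "A = (\<lambda>m. E i - itq P j m E i)" using decomp[of i] by (auto simp: A_def fun_eq_iff algebra_simps)
    moreover have "(\<lambda>m. E i - itq P j m E i) \<longlonglongrightarrow> E i - 0" by (intro tendsto_intros it0)
    ultimately show ?thesis by simp
  qed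
  have mr: "real m * r m i \<le> 2 * (A m - A (m div 2))" for m
  proof -
    define S1 where "S1 = (\<Sum>n\<in>{m div 2..<m}. r n i)"
    define X where "X = real (m - m div 2) * r m i"
    have e1: "A m - A (m div 2) = S1"
      unfolding A_def S1_def using sum_diff_nat_ivl[of 0 "m div 2" m "\<lambda>n. r n i"] by (simp add: atLeast0LessThan)
    have "(\<Sum>n\<in>{m div 2..<m}. r m i) \<le> S1"
      unfolding S1_def by (rule sum_mono) (use r_antimono in auto)
    hence e2: "X \<le> S1" unfolding X_def by simp
    have e3: "real m * r m i \<le> 2 * X"
    proof -
      have "real m \<le> 2 * real (m - m div 2)" by linarith
      from mult_right_mono[OF this r_nn[of m i]] show ?thesis unfolding X_def by (simp only: mult.assoc)
    qed
    have "2 * (A m - A (m div 2)) = 2 * S1" using e1 by simp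
    with e2 e3 show ?thesis by linarith
  qed
  have mr0: "(\<lambda>m. real m * r m i) \<longlonglongrightarrow> 0"
  proof (rule real_tendsto_sandwich[of "\<lambda>_. 0" _ _ "\<lambda>m. 2 * (A m - A (m div 2))"])
    show "\<forall>\<^sub>F n in sequentially. 0 \<le> real n * r n i" using r_nn by simp
    show "\<forall>\<^sub>F n in sequentially. real n * r n i \<le> 2 * (A n - A (n div 2))" using mr by simp
    show "(\<lambda>_. 0::real) \<longlonglongrightarrow> 0" by simp
    have "(\<lambda>m. A (m div 2)) \<longlonglongrightarrow> E i"
      using filterlim_compose[OF A_lim div2_at_top] by simp
    hence "(\<lambda>m. 2 * (A m - A (m div 2))) \<longlonglongrightarrow> 2 * (E i - E i)"
      by (intro tendsto_intros A_lim)
    thus "(\<lambda>m. 2 * (A m - A (m div 2))) \<longlonglongrightarrow> 0" by simp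
  qed
  have psum: "(\<Sum>n<m. real (Suc n) * first_hit P j (Suc n) i) = A m - real m * r m i" for m
    by (induction m) (auto simp: A_def fh algebra_simps)
  have "(\<lambda>n. real (Suc n) * first_hit P j (Suc n) i) sums E i"
    unfolding sums_def psum
    using tendsto_diff[OF A_lim mr0] by simp
  thus ?thesis using sums_Suc_iff[of "\<lambda>n. real n * first_hit P j n i"] by simp
qed

theorem theorem3:
  fixes G :: "'n::finite \<Rightarrow> 'n \<Rightarrow> bool"
    and lam :: real and v :: "'n \<times> 'n \<Rightarrow> real"
    and \<theta> :: "nat \<Rightarrow> real" and \<phi> :: "nat \<Rightarrow> 'n \<Rightarrow> real"
  defines "N \<equiv> card (UNIV :: 'n set)"
    and "x \<equiv> nb_centrality G v"
  assumes simple: "simple_graph G"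
    and conn: "connected_graph G"
    and not_tree: "\<not> is_tree G"
    and perron: "nb_perron_vector G lam v"
    and walk_defined: "\<forall>i. (\<Sum>k\<in>UNIV. adjm G i k * x k) \<noteq> 0"
    and eig: "\<forall>k \<in> {1..N}. \<forall>i. (\<Sum>j\<in>UNIV. laplacian G x i j * \<phi> k j) = \<theta> k * \<phi> k i"
    and orth: "\<forall>k \<in> {1..N}. \<forall>l \<in> {1..N}. (\<Sum>i\<in>UNIV. \<phi> k i * \<phi> l i) = (if k = l then 1 else 0)"
    and theta1: "\<theta> 1 = 0"
    and theta2: "\<theta> 1 < \<theta> 2"
    and sorted: "\<forall>k. 2 \<le> k \<and> k < N \<longrightarrow> \<theta> k \<le> \<theta> (k + 1)"
  shows "(\<forall>i j. hitting_time (nbcrw_prob G x) i j =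
            (\<Sum>z\<in>UNIV. strength G x z * (\<Sum>k = 2..N. (1 / \<theta> k) *
               (\<phi> k j ^ 2 - \<phi> k i * \<phi> k j - \<phi> k j * \<phi> k z + \<phi> k i * \<phi> k z))))
       \<and> (\<forall>j. partial_mean_hitting (nbcrw_prob G x) j =
            real N / (real N - 1) * (\<Sum>k = 2..N. (1 / \<theta> k) *
               (total_strength G x * \<phi> k j ^ 2 - \<phi> k j * (\<Sum>z\<in>UNIV. strength G x z * \<phi> k z))))
       \<and> global_mean_hitting (nbcrw_prob G x) = total_strength G x / (real N - 1) * (\<Sum>k = 2..N. 1 / \<theta> k)"
proof -
  define P where "P = nbcrw_prob G x"
  define w where "w = nb_weight G x"
  define s where "s = strength G x"
  define S where "S = total_strength G x"
  define L where "L = laplacian G x"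
  define d where "d i = (\<Sum>k\<in>UNIV. adjm G i k * x k)" for i
  have symG: "G a b \<Longrightarrow> G b a" for a b using simple by (auto simp: simple_graph_def)
  have adj_sym: "adjm G a b = adjm G b a" for a b using symG by (auto simp: adjm_def)
  have adj_nn: "adjm G a b \<ge> 0" for a b by (simp add: adjm_def)
  obtain vs where cyc: "is_cycle G vs" using conn not_tree by (auto simp: is_tree_def)
  have N3: "N \<ge> 3"
  proof -
    have "length vs = card (set vs)" using cyc by (simp add: is_cycle_def distinct_card)
    also have "\<dots> \<le> N" unfolding N_def by (rule card_mono) auto
    finally show ?thesis using cyc by (simp add: is_cycle_def)
  qed
  have x_nn: "x a \<ge> 0" for a
    using perron unfolding x_def nb_centrality_def nb_perron_vector_def dir_edges_def
    by (auto intro!: sum_nonneg)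
  have d_pos: "d a > 0" for a
  proof -
    have "d a \<ge> 0" unfolding d_def using x_nn adj_nn by (auto intro!: sum_nonneg)
    moreover have "d a \<noteq> 0" using walk_defined by (simp add: d_def)
    ultimately show ?thesis by simp
  qed
  have s_eq: "s a = x a * d a" for a
    unfolding s_def strength_def nb_weight_def d_def sum_distrib_left by (simp add: algebra_simps)
  have w_sym: "w a b = w b a" for a b unfolding w_def nb_weight_def using adj_sym[of a b] by simp
  have L_rowsum: "(\<Sum>b\<in>UNIV. L a b) = 0" for a
    unfolding L_def laplacian_def sum_subtractf by (simp add: s_def w_def strength_def)
  have L_sym: "L a b = L b a" for a b unfolding L_def laplacian_def using w_sym[of a b] by (simp add: w_def)
  have L_colsum: "(\<Sum>a\<in>UNIV. L a b) = 0" for b using L_rowsum[of b] L_sym by simp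
  have theta_ge: "\<theta> 2 \<le> \<theta> k" if "2 \<le> k" "k \<le> N" for k
    using that
  proof (induction k rule: dec_induct)
    case base then show ?case by simp
  next
    case (step m) then show ?case using sorted[rule_format, of m] by simp
  qed
  have theta_pos: "\<theta> k > 0" if "k \<in> {2..N}" for k
    using theta_ge[of k] that theta1 theta2 by auto
  have comp: "(\<Sum>k=1..N. \<phi> k a * \<phi> k b) = (if a = b then 1 else 0)" for a b
    using completeness[of \<phi> a b] orth unfolding N_def by blast
  have eigk: "(\<Sum>b\<in>UNIV. L a b * \<phi> k b) = \<theta> k * \<phi> k a" if "k \<in> {1..N}" for a k
    using eig that unfolding L_def by blast
  have phisum0: "(\<Sum>a\<in>UNIV. \<phi> k a) = 0" if "k \<in> {2..N}" for k
  proof -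
    have k1: "k \<in> {1..N}" using that by auto
    have "\<theta> k * (\<Sum>a\<in>UNIV. \<phi> k a) = (\<Sum>a\<in>UNIV. \<Sum>b\<in>UNIV. L a b * \<phi> k b)"
      using eigk[OF k1] by (simp add: sum_distrib_left)
    also have "\<dots> = (\<Sum>b\<in>UNIV. (\<Sum>a\<in>UNIV. L a b) * \<phi> k b)"
      by (subst sum.swap) (simp add: sum_distrib_right)
    also have "\<dots> = 0" using L_colsum by simp
    finally show ?thesis using theta_pos[OF that] by simp
  qed
  define \<sigma> where "\<sigma> = (\<Sum>b\<in>UNIV. \<phi> 1 b)"
  have split1: "(\<Sum>k=1..N. f k) = f 1 + (\<Sum>k=2..N. f k)" for f :: "nat \<Rightarrow> real"
    using sum.atLeast_Suc_atMost[of 1 N f] N3 by (simp add: numeral_2_eq_2)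
  have phi1: "\<phi> 1 a * \<sigma> = 1" for a
  proof -
    have "1 = (\<Sum>b\<in>UNIV. (if a = b then 1 else 0::real))" by simp
    also have "\<dots> = (\<Sum>b\<in>UNIV. \<Sum>k=1..N. \<phi> k a * \<phi> k b)" using comp by simp
    also have "\<dots> = (\<Sum>k=1..N. \<phi> k a * (\<Sum>b\<in>UNIV. \<phi> k b))"
      by (subst sum.swap) (simp add: sum_distrib_left)
    also have "\<dots> = \<phi> 1 a * \<sigma>" unfolding split1 \<sigma>_def using phisum0 by simp
    finally show ?thesis by simp
  qed
  have sig_nz: "\<sigma> \<noteq> 0" using phi1 by fastforce
  have phi1prod: "\<phi> 1 a * \<phi> 1 b = 1 / \<sigma>^2" for a b
  proof -
    have "(\<phi> 1 a * \<sigma>) * (\<phi> 1 b * \<sigma>) = 1" using phi1[of a] phi1[of b] by simp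
    hence "(\<phi> 1 a * \<phi> 1 b) * \<sigma>^2 = 1" by (simp add: algebra_simps power2_eq_square)
    thus ?thesis using sig_nz by (simp add: field_simps)
  qed
  have comp2: "(\<Sum>k=2..N. \<phi> k a * \<phi> k b) = (if a = b then 1 else 0) - 1 / \<sigma>^2" for a b
    using comp[of a b] unfolding split1 phi1prod by simp
  have x_pos: "x a > 0" for a
  proof (rule ccontr)
    assume "\<not> x a > 0"
    hence xa: "x a = 0" using x_nn[of a] by simp
    have Lz: "L a b = 0" for b
      unfolding L_def laplacian_def s_def[symmetric] s_eq nb_weight_def by (cases "b = a") (simp_all add: xa)
    have phz: "\<phi> k a = 0" if "k \<in> {2..N}" for k
    proof -
      have "\<theta> k * \<phi> k a = 0" using eigk[of k a] that Lz by simp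
      thus ?thesis using theta_pos[OF that] by simp
    qed
    have "\<exists>b::'n. b \<noteq> a"
    proof (rule ccontr)
      assume "\<not> (\<exists>b::'n. b \<noteq> a)"
      hence "UNIV = {a}" by auto
      hence "N = 1" unfolding N_def by (metis card.empty card.insert empty_iff finite.emptyI One_nat_def)
      with N3 show False by simp
    qed
    then obtain b :: 'n where "b \<noteq> a" by blast
    hence "(\<Sum>k=2..N. \<phi> k a * \<phi> k b) = - 1 / \<sigma>^2" using comp2[of a b] by simp
    moreover have "(\<Sum>k=2..N. \<phi> k a * \<phi> k b) = 0" using phz by simp
    ultimately show False using sig_nz by simp
  qed
  have s_pos: "s a > 0" for a using s_eq x_pos d_pos by simp
  have P_eq: "P a b = w a b / s a" for a b
    unfolding P_def nbcrw_prob_def w_def nb_weight_def s_eq d_def[symmetric] using x_pos[of a]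
    by (simp add: field_simps)
  have P_nn: "P a b \<ge> 0" for a b
    unfolding P_def nbcrw_prob_def using adj_nn x_nn d_pos[of a] by (simp add: d_def[symmetric])
  have P_row: "(\<Sum>b\<in>UNIV. P a b) = 1" for a
    unfolding P_def nbcrw_prob_def d_def[symmetric] sum_divide_distrib[symmetric] using d_pos[of a]
    by (simp add: d_def)
  define R where "R a b = (\<Sum>k=2..N. \<phi> k a * \<phi> k b / \<theta> k)" for a b
  have LR: "(\<Sum>c\<in>UNIV. L a c * R c b) = (if a = b then 1 else 0) - 1 / \<sigma>^2" for a b
  proof -
    have "(\<Sum>c\<in>UNIV. L a c * R c b) = (\<Sum>k=2..N. (\<Sum>c\<in>UNIV. L a c * \<phi> k c) * \<phi> k b / \<theta> k)"
      unfolding R_def sum_distrib_left sum_distrib_right sum_divide_distrib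
      by (subst sum.swap) (simp add: algebra_simps)
    also have "\<dots> = (\<Sum>k=2..N. \<phi> k a * \<phi> k b)"
    proof (rule sum.cong)
      fix k assume k: "k \<in> {2..N}"
      hence "k \<in> {1..N}" by auto
      thus "(\<Sum>c\<in>UNIV. L a c * \<phi> k c) * \<phi> k b / \<theta> k = \<phi> k a * \<phi> k b"
        using eigk[of k a] theta_pos[OF k] by simp
    qed simp
    finally show ?thesis using comp2 by simp
  qed
  define Fml where "Fml i j = (\<Sum>z\<in>UNIV. s z * (\<Sum>k = 2..N. (1 / \<theta> k) *
               (\<phi> k j ^ 2 - \<phi> k i * \<phi> k j - \<phi> k j * \<phi> k z + \<phi> k i * \<phi> k z)))" for i j
  define u where "u a = (\<Sum>z\<in>UNIV. s z * R a z)" for a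
  have S_eq: "S = (\<Sum>z\<in>UNIV. s z)" unfolding S_def s_def total_strength_def strength_def by simp
  have Fml_alt: "Fml i j = S * R j j - S * R i j - u j + u i" for i j
  proof -
    have inner: "(\<Sum>k = 2..N. (1 / \<theta> k) *
               (\<phi> k j ^ 2 - \<phi> k i * \<phi> k j - \<phi> k j * \<phi> k z + \<phi> k i * \<phi> k z))
        = R j j - R i j - R j z + R i z" for z
      unfolding R_def sum_subtractf[symmetric] sum.distrib[symmetric]
    proof (rule sum.cong)
      fix k assume "k \<in> {2..N}"
      hence t: "\<theta> k \<noteq> 0" using theta_pos by fastforce
      show "1 / \<theta> k * (\<phi> k j ^ 2 - \<phi> k i * \<phi> k j - \<phi> k j * \<phi> k z + \<phi> k i * \<phi> k z) =
        \<phi> k j * \<phi> k j / \<theta> k - \<phi> k i * \<phi> k j / \<theta> k - \<phi> k j * \<phi> k z / \<theta> k + \<phi> k i * \<phi> k z / \<theta> k"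
        using t by (simp add: field_simps power2_eq_square)
    qed simp
    have "Fml i j = (\<Sum>z\<in>UNIV. s z * (R j j - R i j) - s z * R j z + s z * R i z)"
      unfolding Fml_def inner by (simp add: algebra_simps)
    also have "\<dots> = S * (R j j - R i j) - u j + u i"
      unfolding sum.distrib sum_subtractf S_eq u_def sum_distrib_right by simp
    finally show ?thesis by (simp add: algebra_simps)
  qed
  have Fml_jj: "Fml j j = 0" for j unfolding Fml_alt by simp
  have LF: "(\<Sum>k\<in>UNIV. L i k * Fml k j) = s i" if "i \<noteq> j" for i j
  proof -
    define c where "c = 1 / \<sigma>^2"
    have "(\<Sum>k\<in>UNIV. L i k * Fml k j) =
       (S * R j j - u j) * (\<Sum>k\<in>UNIV. L i k) - S * (\<Sum>k\<in>UNIV. L i k * R k j) + (\<Sum>k\<in>UNIV. L i k * u k)"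
      unfolding Fml_alt sum_distrib_left sum_distrib_right sum_subtractf[symmetric] sum.distrib[symmetric]
      by (rule sum.cong) (simp_all add: algebra_simps)
    also have "(\<Sum>k\<in>UNIV. L i k * u k) = (\<Sum>z\<in>UNIV. s z * (\<Sum>k\<in>UNIV. L i k * R k z))"
      unfolding u_def sum_distrib_left by (subst sum.swap) (simp add: algebra_simps)
    also have "\<dots> = (\<Sum>z\<in>UNIV. s z * (if i = z then 1 else 0) - s z * c)"
      unfolding LR c_def by (simp add: algebra_simps)
    also have "\<dots> = s i - S * c"
    proof -
      have "(\<Sum>z\<in>UNIV. s z * (if i = z then 1 else 0)) = (\<Sum>z\<in>UNIV. if i = z then s z else 0)"
        by (rule sum.cong) auto
      also have "\<dots> = s i" by simp
      finally show ?thesis unfolding sum_subtractf S_eq sum_distrib_right by simp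
    qed
    finally show ?thesis using that L_rowsum unfolding LR c_def by simp
  qed
  have Frec: "Fml i j = 1 + (\<Sum>k\<in>{k. k \<noteq> j}. P i k * Fml k j)" if "i \<noteq> j" for i j
  proof -
    have "(\<Sum>k\<in>UNIV. L i k * Fml k j) = s i * Fml i j - (\<Sum>k\<in>UNIV. w i k * Fml k j)"
    proof -
      have "(\<Sum>k\<in>UNIV. (if i = k then s i else 0) * Fml k j) = (\<Sum>k\<in>UNIV. if i = k then s i * Fml k j else 0)"
        by (rule sum.cong) auto
      also have "\<dots> = s i * Fml i j" by simp
      finally show ?thesis
        unfolding L_def laplacian_def w_def[symmetric] s_def[symmetric] left_diff_distrib sum_subtractf
        by simp
    qed
    hence e: "s i * Fml i j - (\<Sum>k\<in>UNIV. w i k * Fml k j) = s i" using LF[OF that] by simp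
    have "(\<Sum>k\<in>UNIV. P i k * Fml k j) = (\<Sum>k\<in>UNIV. w i k * Fml k j) / s i"
      unfolding P_eq sum_divide_distrib by simp
    also have "\<dots> = Fml i j - 1" using e s_pos[of i] by (simp add: field_simps)
    finally have e2: "(\<Sum>k\<in>UNIV. P i k * Fml k j) = Fml i j - 1" .
    have "(\<Sum>k\<in>UNIV. P i k * Fml k j) = P i j * Fml j j + (\<Sum>k\<in>{k. k \<noteq> j}. P i k * Fml k j)"
    proof -
      have "(\<Sum>k\<in>UNIV. P i k * Fml k j) = (\<Sum>k\<in>insert j {k. k \<noteq> j}. P i k * Fml k j)" by (rule sum.cong) auto
      also have "\<dots> = P i j * Fml j j + (\<Sum>k\<in>{k. k \<noteq> j}. P i k * Fml k j)" by (rule sum.insert) auto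
      finally show ?thesis .
    qed
    with e2 Fml_jj show ?thesis by simp
  qed
  have hit: "hitting_time P i j = Fml i j" for i j
  proof (cases "i = j")
    case True thus ?thesis by (simp add: hitting_time_def Fml_jj)
  next
    case False
    define E where "E a = (if a = j then 1 + (\<Sum>k\<in>{k. k \<noteq> j}. P a k * Fml k j) else Fml a j)" for a
    have Eeq: "E a = 1 + (\<Sum>k\<in>{k. k \<noteq> j}. P a k * E k)" for a
    proof -
      have "(\<Sum>k\<in>{k. k \<noteq> j}. P a k * E k) = (\<Sum>k\<in>{k. k \<noteq> j}. P a k * Fml k j)"
        by (rule sum.cong) (auto simp: E_def)
      thus ?thesis using Frec[of a j] by (simp add: E_def)
    qed
    have "(\<lambda>n. real n * first_hit P j n i) sums E i"
      by (rule hitting_sums[OF P_nn P_row Eeq])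
    hence "hitting_time P i j = E i" using False by (simp add: hitting_time_def sums_unique[symmetric])
    thus ?thesis using False by (simp add: E_def)
  qed
  define U where "U k = (\<Sum>z\<in>UNIV. s z * \<phi> k z)" for k
  define T2 where "T2 j = (\<Sum>k = 2..N. (1 / \<theta> k) * (S * \<phi> k j ^ 2 - \<phi> k j * U k))" for j
  have sumFml: "(\<Sum>i\<in>UNIV. Fml i j) = real N * T2 j" for j
  proof -
    define g where "g i z k = \<phi> k j ^ 2 - \<phi> k i * \<phi> k j - \<phi> k j * \<phi> k z + \<phi> k i * \<phi> k z" for i z k
    have gsum: "(\<Sum>i\<in>UNIV. g i z k) = real N * (\<phi> k j ^ 2 - \<phi> k j * \<phi> k z)" if "k \<in> {2..N}" for z k
    proof -
      have "(\<Sum>i\<in>UNIV. g i z k) = real N * \<phi> k j ^ 2 - (\<Sum>i\<in>UNIV. \<phi> k i) * \<phi> k j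
          - real N * (\<phi> k j * \<phi> k z) + (\<Sum>i\<in>UNIV. \<phi> k i) * \<phi> k z"
        unfolding g_def sum.distrib sum_subtractf sum_distrib_right by (simp add: N_def)
      thus ?thesis using phisum0[OF that] by (simp add: algebra_simps)
    qed
    have "(\<Sum>i\<in>UNIV. Fml i j) = (\<Sum>i\<in>UNIV. \<Sum>z\<in>UNIV. \<Sum>k=2..N. s z * (1 / \<theta> k) * g i z k)"
      unfolding Fml_def g_def sum_distrib_left by (simp add: mult.assoc)
    also have "\<dots> = (\<Sum>z\<in>UNIV. \<Sum>k=2..N. s z * (1 / \<theta> k) * (\<Sum>i\<in>UNIV. g i z k))"
      unfolding sum_distrib_left
      by (subst sum.swap) (rule sum.cong, simp, subst sum.swap, simp)
    also have "\<dots> = (\<Sum>z\<in>UNIV. \<Sum>k=2..N. real N * ((1 / \<theta> k) * (s z * \<phi> k j ^ 2 - \<phi> k j * (s z * \<phi> k z))))"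
      by (intro sum.cong refl) (simp add: gsum algebra_simps)
    also have "\<dots> = (\<Sum>k=2..N. \<Sum>z\<in>UNIV. real N * ((1 / \<theta> k) * (s z * \<phi> k j ^ 2 - \<phi> k j * (s z * \<phi> k z))))"
      by (rule sum.swap)
    also have "\<dots> = real N * T2 j"
      unfolding T2_def sum_distrib_left[of "real N"]
    proof (rule sum.cong)
      fix k
      show "(\<Sum>z\<in>UNIV. real N * ((1 / \<theta> k) * (s z * \<phi> k j ^ 2 - \<phi> k j * (s z * \<phi> k z)))) =
        real N * ((1 / \<theta> k) * (S * \<phi> k j ^ 2 - \<phi> k j * U k))"
        unfolding S_eq U_def by (simp add: sum_distrib_left sum_distrib_right sum_subtractf algebra_simps)
    qed simp
    finally show ?thesis .
  qed
  have N1: "real N - 1 \<noteq> 0" using N3 by simp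
  have partial: "partial_mean_hitting P j = real N / (real N - 1) * T2 j" for j
    unfolding partial_mean_hitting_def N_def[symmetric] hit sumFml by simp
  have rowsum: "(\<Sum>j\<in>{j. j \<noteq> i}. hitting_time P i j) = (\<Sum>j\<in>UNIV. Fml i j)" for i
  proof -
    have "(\<Sum>j\<in>UNIV. Fml i j) = (\<Sum>j\<in>insert i {j. j \<noteq> i}. Fml i j)" by (rule sum.cong) auto
    also have "\<dots> = Fml i i + (\<Sum>j\<in>{j. j \<noteq> i}. Fml i j)" by (rule sum.insert) auto
    finally show ?thesis using Fml_jj hit by simp
  qed
  have sumT2: "(\<Sum>j\<in>UNIV. T2 j) = S * (\<Sum>k = 2..N. 1 / \<theta> k)"
  proof -
    have "(\<Sum>j\<in>UNIV. T2 j) = (\<Sum>k = 2..N. (1 / \<theta> k) * (S * (\<Sum>j\<in>UNIV. \<phi> k j * \<phi> k j) - (\<Sum>j\<in>UNIV. \<phi> k j) * U k))"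
      unfolding T2_def sum_distrib_left sum_distrib_right sum_subtractf
      by (subst sum.swap) (simp add: algebra_simps power2_eq_square sum_divide_distrib sum_subtractf)
    also have "\<dots> = (\<Sum>k = 2..N. (1 / \<theta> k) * S)"
    proof (rule sum.cong)
      fix k assume k: "k \<in> {2..N}"
      hence "(\<Sum>j\<in>UNIV. \<phi> k j * \<phi> k j) = 1" using orth by auto
      thus "(1 / \<theta> k) * (S * (\<Sum>j\<in>UNIV. \<phi> k j * \<phi> k j) - (\<Sum>j\<in>UNIV. \<phi> k j) * U k) = (1 / \<theta> k) * S"
        using phisum0[OF k] by simp
    qed simp
    finally show ?thesis by (simp add: sum_distrib_left algebra_simps)
  qed
  have global: "global_mean_hitting P = S / (real N - 1) * (\<Sum>k = 2..N. 1 / \<theta> k)"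
  proof -
    have "(\<Sum>i\<in>UNIV. \<Sum>j\<in>{j. j \<noteq> i}. hitting_time P i j) = (\<Sum>j\<in>UNIV. \<Sum>i\<in>UNIV. Fml i j)"
      unfolding rowsum by (rule sum.swap)
    also have "\<dots> = real N * (S * (\<Sum>k = 2..N. 1 / \<theta> k))"
      unfolding sumFml sum_distrib_left[symmetric] sumT2 ..
    finally show ?thesis
      unfolding global_mean_hitting_def N_def[symmetric] using N1 N3 by (simp add: field_simps)
  qed
  show ?thesis
    using hit partial global unfolding P_def Fml_def T2_def U_def s_def S_def by simp
qed

end
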